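(* Suppose every request of the input $\sigma$ is a triggering request with respect to ALG run on $\sigma$. For each $k\in[m]$ let $x_k$ be the position of $e_k$ in ALG's list at time $q_k$ just before ALG acts at that time. Then $$ALG(\sigma)\le 3\sum_{k=1}^m x_k.$$
   Context: List Update with Time Windows. A set $\mathbb{E}$ of $n$ elements is kept in an ordered list (position $1$ is the head). An input $\sigma$ is a sequence of requests $r_1,\dots,r_m$; request $r_k$ specifies an element $e_k\in\mathbb{E}$, an arrival time $a_k$ and a deadline $q_k\ge a_k$. An algorithm may perform an access up to position $i$ at cost $i$, serving every pending request whose element currently lies in positions $1,\dots,i$, and may swap adjacent elements at cost $1$; actions are instantaneous; every request must be served within $[a_k,q_k]$. Cost = total access cost + number of swaps. Algorithm ALG: whenever the current time equals the deadline of at least one pending request, let the triggering element be the element at the largest current position among those elements having a pending request whose deadline is the current time, and let $i$ be its position. ALG accesses the first $\min(2i-1,n)$ positions and then moves the triggering element to the front by $i-1$ adjacent swaps. At each such event the triggering request is one (arbitrarily fixed) pending request for the triggering element whose deadline is the current time. A request of $\sigma$ is a triggering request if it is the triggering request of some event of ALG on $\sigma$. *)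

theory Defs
  imports Complex_Main
begin

text \<open>
  The input sigma is a list of requests; request k (0-based index k < length sigma)
  is the paper's request r_(k+1).  The initial list of ALG is a distinct list
  containing the n elements of E (head first).
\<close>

type_synonym 'a request = "'a \<times> real \<times> real"

definition elem :: "'a request \<Rightarrow> 'a" where "elem r = fst r"
definition arr :: "'a request \<Rightarrow> real" where "arr r = fst (snd r)"
definition dl :: "'a request \<Rightarrow> real" where "dl r = snd (snd r)"

definition pos :: "'a list \<Rightarrow> 'a \<Rightarrow> nat" where
  "pos L e = length (takeWhile (\<lambda>x. x \<noteq> e) L) + 1"

text \<open>State of ALG: current list, set of served request indices, accumulated cost.\<close>
type_synonym 'a state = "'a list \<times> nat set \<times> nat"

definition pending :: "'a request list \<Rightarrow> nat set \<Rightarrow> real \<Rightarrow> nat \<Rightarrow> bool" where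
  "pending \<sigma> S t k \<longleftrightarrow> k < length \<sigma> \<and> k \<notin> S \<and> arr (\<sigma>!k) \<le> t"

definition due :: "'a request list \<Rightarrow> nat set \<Rightarrow> real \<Rightarrow> nat set" where
  "due \<sigma> S t = {k. pending \<sigma> S t k \<and> dl (\<sigma>!k) = t}"

definition trig_pos :: "'a request list \<Rightarrow> 'a state \<Rightarrow> real \<Rightarrow> nat" where
  "trig_pos \<sigma> st t = Max ((\<lambda>k. pos (fst st) (elem (\<sigma>!k))) ` due \<sigma> (fst (snd st)) t)"

definition trig_elem :: "'a request list \<Rightarrow> 'a state \<Rightarrow> real \<Rightarrow> 'a" where
  "trig_elem \<sigma> st t = fst st ! (trig_pos \<sigma> st t - 1)"

text \<open>One event of ALG at time t: access the first min(2i-1,n) positions (serving every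
  pending request whose element lies there), then move the triggering element to the
  front using i-1 adjacent swaps.\<close>
definition alg_step :: "'a request list \<Rightarrow> real \<Rightarrow> 'a state \<Rightarrow> 'a state" where
  "alg_step \<sigma> t st =
     (let (L, S, c) = st in
      if due \<sigma> S t = {} then st
      else let i = trig_pos \<sigma> st t;
               m = min (2 * i - 1) (length L);
               e = trig_elem \<sigma> st t;
               S' = S \<union> {k. pending \<sigma> S t k \<and> pos L (elem (\<sigma>!k)) \<le> m}
           in (e # remove1 e L, S', c + m + (i - 1)))"

definition deadlines :: "'a request list \<Rightarrow> real set" where
  "deadlines \<sigma> = dl ` set \<sigma>"

definition state_before :: "'a list \<Rightarrow> 'a request list \<Rightarrow> real \<Rightarrow> 'a state" where
  "state_before L0 \<sigma> t =
     fold (alg_step \<sigma>) (sorted_list_of_set {d \<in> deadlines \<sigma>. d < t}) (L0, {}, 0)"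

definition alg_final :: "'a list \<Rightarrow> 'a request list \<Rightarrow> 'a state" where
  "alg_final L0 \<sigma> = fold (alg_step \<sigma>) (sorted_list_of_set (deadlines \<sigma>)) (L0, {}, 0)"

definition alg_cost :: "'a list \<Rightarrow> 'a request list \<Rightarrow> nat" where
  "alg_cost L0 \<sigma> = snd (snd (alg_final L0 \<sigma>))"

definition is_event :: "'a list \<Rightarrow> 'a request list \<Rightarrow> real \<Rightarrow> bool" where
  "is_event L0 \<sigma> t \<longleftrightarrow> t \<in> deadlines \<sigma> \<and> due \<sigma> (fst (snd (state_before L0 \<sigma> t))) t \<noteq> {}"

definition trig_candidates :: "'a list \<Rightarrow> 'a request list \<Rightarrow> real \<Rightarrow> nat set" where
  "trig_candidates L0 \<sigma> t =
     (let st = state_before L0 \<sigma> t in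
      {k \<in> due \<sigma> (fst (snd st)) t. elem (\<sigma>!k) = trig_elem \<sigma> st t})"

text \<open>A choice of triggering request (arbitrary, but fixed) for every event.\<close>
definition valid_choice :: "'a list \<Rightarrow> 'a request list \<Rightarrow> (real \<Rightarrow> nat) \<Rightarrow> bool" where
  "valid_choice L0 \<sigma> ch \<longleftrightarrow> (\<forall>t. is_event L0 \<sigma> t \<longrightarrow> ch t \<in> trig_candidates L0 \<sigma> t)"

definition triggering_request :: "'a list \<Rightarrow> 'a request list \<Rightarrow> (real \<Rightarrow> nat) \<Rightarrow> nat \<Rightarrow> bool" where
  "triggering_request L0 \<sigma> ch k \<longleftrightarrow> (\<exists>t. is_event L0 \<sigma> t \<and> ch t = k)"

end

theory Submission imports Defs begin
lemma pos_nth: "x \<in> set L \<Longrightarrow> pos L x \<le> length L \<and> L ! (pos L x - 1) = x"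
proof -
  assume x: "x \<in> set L"
  have l: "length (takeWhile (\<lambda>y. y \<noteq> x) L) < length L"
    using x by (induct L) auto
  show ?thesis using nth_length_takeWhile[OF l] l by (simp add: pos_def)
qed

lemma sl_filter:
  fixes D :: "real set"
  assumes "finite D"
  shows "sorted_list_of_set {d \<in> D. P d} = filter P (sorted_list_of_set D)"
proof -
  let ?ys = "filter P (sorted_list_of_set D)"
  have "sorted ?ys"
    by (metis sorted_sorted_list_of_set sorted_wrt_filter)
  moreover have "distinct ?ys" by simp
  ultimately have e: "sorted_list_of_set (set ?ys) = ?ys"
    by (simp only: sorted_list_of_set_sort_remdups distinct_remdups_id sorted_sort_id)
  have "set ?ys = {d \<in> D. P d}" using assms by auto
  with e show ?thesis by simp
qed

lemma filter_less_take:
  fixes xs :: "real list"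
  assumes "sorted_wrt (<) xs" "j < length xs"
  shows "filter (\<lambda>d. d < xs ! j) xs = take j xs"
proof -
  have "xs = take j xs @ drop j xs" by simp
  have a: "\<forall>x\<in>set (take j xs). x < xs ! j"
    using assms by (auto simp: in_set_conv_nth sorted_wrt_nth_less)
  have b: "\<forall>x\<in>set (drop j xs). \<not> x < xs ! j"
  proof
    fix x assume "x \<in> set (drop j xs)"
    then obtain i where "i < length xs - j" "x = xs ! (j + i)" by (auto simp: in_set_conv_nth)
    then show "\<not> x < xs ! j" using assms
    proof -
      have "j + i < length xs" using \<open>i < length xs - j\<close> by arith
      then show ?thesis using sorted_nth_mono[OF strict_sorted_imp_sorted[OF assms(1)], of j "j+i"] \<open>x = _\<close> by auto
    qed
  qed
  have "filter (\<lambda>d. d < xs ! j) xs = filter (\<lambda>d. d < xs ! j) (take j xs) @ filter (\<lambda>d. d < xs ! j) (drop j xs)"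
    by (metis append_take_drop_id filter_append)
  also have "\<dots> = take j xs" using a b by simp
  finally show ?thesis .
qed

lemma due_finite: "finite (due \<sigma> S t)"
  by (rule finite_subset[of _ "{..<length \<sigma>}"]) (auto simp: due_def pending_def)

lemma step_inv:
  assumes "set (fst st) = set L0" "distinct (fst st)" "\<forall>r \<in> set \<sigma>. elem r \<in> set L0"
  shows "set (fst (alg_step \<sigma> t st)) = set L0 \<and> distinct (fst (alg_step \<sigma> t st))
    \<and> (\<forall>k \<in> due \<sigma> (fst (snd st)) t. elem (\<sigma>!k) = trig_elem \<sigma> st t \<longrightarrow>
          snd (snd (alg_step \<sigma> t st)) \<le> snd (snd st) + 3 * pos (fst st) (elem (\<sigma>!k)))
    \<and> (due \<sigma> (fst (snd st)) t = {} \<longrightarrow> alg_step \<sigma> t st = st)"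
proof -
  obtain L S c where st: "st = (L, S, c)" by (cases st) auto
  show ?thesis
  proof (cases "due \<sigma> S t = {}")
    case True
    then show ?thesis using assms st by (simp add: alg_step_def)
  next
    case False
    define i where "i = trig_pos \<sigma> st t"
    have "i \<in> (\<lambda>k. pos L (elem (\<sigma>!k))) ` due \<sigma> S t"
      unfolding i_def trig_pos_def using st False finite_imageI[OF due_finite] by (simp, intro Max_in) auto
    then obtain k' where k': "k' \<in> due \<sigma> S t" "i = pos L (elem (\<sigma>!k'))" by auto
    have "k' < length \<sigma>" using k' by (simp add: due_def pending_def)
    then have "elem (\<sigma>!k') \<in> set L" using assms st by auto
    from pos_nth[OF this] k' have te: "trig_elem \<sigma> st t = elem (\<sigma>!k')" and il: "i \<le> length L"
      unfolding trig_elem_def i_def[symmetric] using st by auto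
    have eL: "elem (\<sigma>!k') \<in> set L" by fact
    have i1: "i \<ge> 1" using k' by (simp add: pos_def)
    have as: "alg_step \<sigma> t st = (elem (\<sigma>!k') # remove1 (elem (\<sigma>!k')) L,
        S \<union> {k. pending \<sigma> S t k \<and> pos L (elem (\<sigma>!k)) \<le> min (2 * i - 1) (length L)},
        c + min (2 * i - 1) (length L) + (i - 1))"
      using False st te unfolding alg_step_def i_def by (simp add: Let_def)
    have c1: "snd (snd (alg_step \<sigma> t st)) \<le> snd (snd st) + 3 * pos (fst st) (elem (\<sigma>!k))"
      if "elem (\<sigma>!k) = trig_elem \<sigma> st t" for k
    proof -
      have "pos (fst st) (elem (\<sigma>!k)) = i" using that te k' st by simp
      then show ?thesis using as st by simp
    qed
    show ?thesis using as st assms eL c1 False by auto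
  qed
qed

lemma fold_inv:
  assumes "set (fst st) = set L0" "distinct (fst st)" "\<forall>r \<in> set \<sigma>. elem r \<in> set L0"
  shows "set (fst (fold (alg_step \<sigma>) ts st)) = set L0 \<and> distinct (fst (fold (alg_step \<sigma>) ts st))"
  using assms
proof (induction ts arbitrary: st)
  case Nil
  then show ?case by simp
next
  case (Cons a ts)
  from step_inv[OF Cons.prems] have "set (fst (alg_step \<sigma> a st)) = set L0 \<and> distinct (fst (alg_step \<sigma> a st))" by blast
  then show ?case using Cons.IH Cons.prems(3) by simp
qed

theorem mainTheorem5:
  fixes L0 :: "'a list" and \<sigma> :: "'a request list" and ch :: "real \<Rightarrow> nat"
  assumes "distinct L0"
    and "\<forall>r \<in> set \<sigma>. elem r \<in> set L0 \<and> arr r \<le> dl r"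
    and "valid_choice L0 \<sigma> ch"
    and "\<forall>k < length \<sigma>. triggering_request L0 \<sigma> ch k"
  shows "alg_cost L0 \<sigma> \<le>
           3 * (\<Sum>k < length \<sigma>. pos (fst (state_before L0 \<sigma> (dl (\<sigma>!k)))) (elem (\<sigma>!k)))"
proof -
  define D where "D = deadlines \<sigma>"
  define xs where "xs = sorted_list_of_set D"
  define s0 :: "'a state" where "s0 = (L0, {}, 0)"
  define G where "G k = pos (fst (state_before L0 \<sigma> (dl (\<sigma>!k)))) (elem (\<sigma>!k))" for k
  define E where "E = {t \<in> D. is_event L0 \<sigma> t}"
  define g where "g t = (if t \<in> E then 3 * G (ch t) else 0)" for t
  have el: "\<forall>r \<in> set \<sigma>. elem r \<in> set L0" using assms(2) by auto
  have finD: "finite D" by (simp add: D_def deadlines_def)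
  have sw: "sorted_wrt (<) xs" unfolding xs_def by simp
  have dxs: "distinct xs" unfolding xs_def by simp
  have sxs: "set xs = D" unfolding xs_def using finD by simp
  have sb: "state_before L0 \<sigma> (xs!j) = fold (alg_step \<sigma>) (take j xs) s0" if "j < length xs" for j
    unfolding state_before_def s0_def D_def[symmetric]
    using sl_filter[OF finD] filter_less_take[OF sw that] xs_def by simp
  have chE: "ch t \<in> due \<sigma> (fst (snd (state_before L0 \<sigma> t))) t \<and>
      elem (\<sigma>!(ch t)) = trig_elem \<sigma> (state_before L0 \<sigma> t) t" if "t \<in> E" for t
    using assms(3) that unfolding valid_choice_def E_def trig_candidates_def by (auto simp: Let_def)
  have chdl: "dl (\<sigma>!(ch t)) = t \<and> ch t < length \<sigma>" if "t \<in> E" for t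
    using chE[OF that] by (simp add: due_def pending_def)
  have ind: "snd (snd (fold (alg_step \<sigma>) (take j xs) s0)) \<le> sum_list (map g (take j xs))"
    if "j \<le> length xs" for j
    using that
  proof (induction j)
    case 0
    then show ?case by (simp add: s0_def)
  next
    case (Suc j)
    let ?st = "fold (alg_step \<sigma>) (take j xs) s0"
    have jl: "j < length xs" using Suc.prems by simp
    have inv: "set (fst ?st) = set L0" "distinct (fst ?st)"
      using fold_inv[of s0 L0 \<sigma>] assms(1) el by (auto simp: s0_def)
    note stp = step_inv[OF inv el, of "xs!j"]
    have tD: "xs!j \<in> D" using jl sxs nth_mem by blast
    have e: "fold (alg_step \<sigma>) (take (Suc j) xs) s0 = alg_step \<sigma> (xs!j) ?st"
      using jl by (simp add: take_Suc_conv_app_nth)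
    have "snd (snd (alg_step \<sigma> (xs!j) ?st)) \<le> snd (snd ?st) + g (xs!j)"
    proof (cases "xs!j \<in> E")
      case True
      have "snd (snd (alg_step \<sigma> (xs!j) ?st)) \<le> snd (snd ?st) + 3 * pos (fst ?st) (elem (\<sigma>!(ch (xs!j))))"
        using stp chE[OF True] sb[OF jl] by auto
      moreover have "G (ch (xs!j)) = pos (fst ?st) (elem (\<sigma>!(ch (xs!j))))"
        using chdl[OF True] sb[OF jl] by (simp add: G_def)
      ultimately show ?thesis using True by (simp add: g_def)
    next
      case False
      then have "due \<sigma> (fst (snd ?st)) (xs!j) = {}"
        using tD sb[OF jl] by (simp add: E_def is_event_def D_def)
      then show ?thesis using stp by simp
    qed
    then show ?case using Suc.IH jl e by (simp add: take_Suc_conv_app_nth)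
  qed
  have "alg_cost L0 \<sigma> = snd (snd (fold (alg_step \<sigma>) (take (length xs) xs) s0))"
    by (simp add: alg_cost_def alg_final_def xs_def s0_def D_def)
  also have "\<dots> \<le> sum_list (map g xs)" using ind[of "length xs"] by simp
  also have "\<dots> = sum g D" using dxs sxs by (simp add: sum_list_distinct_conv_sum_set)
  also have "\<dots> = sum g E"
    by (rule sum.mono_neutral_right) (auto simp: finD E_def g_def)
  also have "\<dots> = (\<Sum>t\<in>E. 3 * G (ch t))" by (simp add: g_def)
  also have "\<dots> = 3 * (\<Sum>k\<in>ch ` E. G k)"
  proof -
    have "inj_on ch E" by (metis chdl inj_onI)
    then show ?thesis by (simp add: sum.reindex sum_distrib_left)
  qed
  also have "\<dots> \<le> 3 * (\<Sum>k < length \<sigma>. G k)"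
    using chdl by (intro mult_left_mono sum_mono2) auto
  finally show ?thesis by (simp add: G_def)
qed

end
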